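(* For every integer $k\ge 2$, the complete graph $\mathcal K_k$ is an almost minor of the $(2k-2)\times(2k-2)$ grid graph $\mathcal G_{2k-2}$.
   Context: The $n\times n$ grid graph $\mathcal G_n$ has vertices $v_{i,j}$, $i,j\in[n]$, with $v_{i,j}$ adjacent to $v_{i',j'}$ iff $|i-i'|+|j-j'|=1$. For graphs $\mathcal G_X,\mathcal G_Y$ with vertex sets $X,Y$, a map $M:Y\to 2^X$ is almost minor if: (1) $|M(y)|\in\{1,2\}$ for every $y\in Y$; (2) for every $x\in X$ there is $y\in Y$ with $M(y)=\{x\}$, and for all $x,x'$ adjacent in $\mathcal G_X$ there are $y,y'$ adjacent in $\mathcal G_Y$ with $M(y)=\{x\}$ and $M(y')=\{x'\}$; (3) for each $x\in X$ the set $\{y: x\in M(y)\}$ is connected in $\mathcal G_Y$; (4) if $M(y)=\{x,x'\}$ with $x\ne x'$ and $y'$ is adjacent to $y$, then $M(y')=\{x\}$ or $M(y')=\{x'\}$. $\mathcal G_X$ is an almost minor of $\mathcal G_Y$ if such a map exists. *)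

theory Defs
  imports Main
begin

definition connected_in :: "'a set \<Rightarrow> ('a \<Rightarrow> 'a \<Rightarrow> bool) \<Rightarrow> 'a set \<Rightarrow> bool" where
  "connected_in V E S \<longleftrightarrow> S \<subseteq> V \<and>
     (\<forall>u\<in>S. \<forall>v\<in>S. (\<lambda>a b. a \<in> S \<and> b \<in> S \<and> E a b)\<^sup>*\<^sup>* u v)"

definition almost_minor_map ::
  "'a set \<Rightarrow> ('a \<Rightarrow> 'a \<Rightarrow> bool) \<Rightarrow> 'b set \<Rightarrow> ('b \<Rightarrow> 'b \<Rightarrow> bool) \<Rightarrow> ('b \<Rightarrow> 'a set) \<Rightarrow> bool" where
  "almost_minor_map X EXr Y EYr M \<longleftrightarrow>
     (\<forall>y\<in>Y. M y \<subseteq> X \<and> card (M y) \<in> {1, 2}) \<and>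
     (\<forall>x\<in>X. \<exists>y\<in>Y. M y = {x}) \<and>
     (\<forall>x\<in>X. \<forall>x'\<in>X. EXr x x' \<longrightarrow>
        (\<exists>y\<in>Y. \<exists>y'\<in>Y. EYr y y' \<and> M y = {x} \<and> M y' = {x'})) \<and>
     (\<forall>x\<in>X. connected_in Y EYr {y\<in>Y. x \<in> M y}) \<and>
     (\<forall>y\<in>Y. \<forall>x x'. M y = {x, x'} \<and> x \<noteq> x' \<longrightarrow>
        (\<forall>y'\<in>Y. EYr y y' \<longrightarrow> M y' = {x} \<or> M y' = {x'}))"

definition is_almost_minor ::
  "'a set \<Rightarrow> ('a \<Rightarrow> 'a \<Rightarrow> bool) \<Rightarrow> 'b set \<Rightarrow> ('b \<Rightarrow> 'b \<Rightarrow> bool) \<Rightarrow> bool" where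
  "is_almost_minor X EXr Y EYr \<longleftrightarrow> (\<exists>M. almost_minor_map X EXr Y EYr M)"

definition grid_vertices :: "nat \<Rightarrow> (nat \<times> nat) set" where
  "grid_vertices n = {1..n} \<times> {1..n}"

definition grid_adj :: "nat \<times> nat \<Rightarrow> nat \<times> nat \<Rightarrow> bool" where
  "grid_adj p q \<longleftrightarrow>
     \<bar>int (fst p) - int (fst q)\<bar> + \<bar>int (snd p) - int (snd q)\<bar> = 1"

definition complete_vertices :: "nat \<Rightarrow> nat set" where
  "complete_vertices k = {1..k}"

definition complete_adj :: "nat \<Rightarrow> nat \<Rightarrow> bool" where
  "complete_adj x y \<longleftrightarrow> x \<noteq> y"

end

theory Submission
  imports Defs
begin

fun Mk :: "nat \<Rightarrow> nat \<times> nat \<Rightarrow> nat set" where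
  "Mk k (r,c) = (if c < r then {k} else if even c then {(r+1) div 2}
      else if even r then {(c+1) div 2} else {(r+1) div 2, (c+1) div 2})"

lemma memk: "1 \<le> r \<Longrightarrow> r \<le> 2*k-2 \<Longrightarrow> 1 \<le> c \<Longrightarrow> c \<le> 2*k-2 \<Longrightarrow> k \<in> Mk k (r,c) \<longleftrightarrow> c < r"
  by auto

lemma mema: "1 \<le> a \<Longrightarrow> a < k \<Longrightarrow> 1 \<le> r \<Longrightarrow> r \<le> 2*k-2 \<Longrightarrow> 1 \<le> c \<Longrightarrow> c \<le> 2*k-2 \<Longrightarrow>
  a \<in> Mk k (r,c) \<longleftrightarrow> (r=2*a-1 \<and> 2*a-1 \<le> c) \<or> (r = 2*a \<and> even c \<and> 2*a \<le> c) \<or> (c = 2*a-1 \<and> r \<le> c)"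
  by (auto split: if_splits)

lemma descent_connected:
  assumes symE: "\<And>a b. E a b \<Longrightarrow> E b a"
  and SV: "S \<subseteq> V" and rt: "root \<in> S"
  and step: "\<And>s. s\<in>S \<Longrightarrow> s \<noteq> root \<Longrightarrow> (\<exists>t\<in>S. E s t \<and> (f t::nat) < f s)"
  shows "connected_in V E S"
proof -
  let ?R = "\<lambda>a b. a \<in> S \<and> b \<in> S \<and> E a b"
  have reach: "?R\<^sup>*\<^sup>* s root" if "s \<in> S" for s
    using that
  proof (induction "f s" arbitrary: s rule: less_induct)
    case less
    show ?case
    proof (cases "s = root")
      case True then show ?thesis by simp
    next
      case False
      then obtain t where "t \<in> S" "E s t" "f t < f s" using step less.prems by blast
      then have "?R\<^sup>*\<^sup>* t root" using less by blast
      moreover have "?R s t" using \<open>t \<in> S\<close> \<open>E s t\<close> less.prems by blast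
      ultimately show ?thesis by (rule converse_rtranclp_into_rtranclp[rotated])
    qed
  qed
  have sym: "?R\<^sup>*\<^sup>* b a" if "?R\<^sup>*\<^sup>* a b" for a b
    using that
  proof (induction rule: rtranclp.induct)
    case (rtrancl_refl a) then show ?case by simp
  next
    case (rtrancl_into_rtrancl a b c)
    then have "?R c b" using symE by blast
    then show ?case using rtrancl_into_rtrancl(3) by (rule converse_rtranclp_into_rtranclp)
  qed
  show ?thesis unfolding connected_in_def
    using SV reach sym by (meson rtranclp_trans)
qed

lemma gadj: "grid_adj (r,c) (r',c') \<longleftrightarrow> \<bar>int r - int r'\<bar> + \<bar>int c - int c'\<bar> = 1"
  by (simp add: grid_adj_def)

lemma grid_sym: "grid_adj a b \<Longrightarrow> grid_adj b a"
  by (auto simp: grid_adj_def)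

lemma conn_k:
  assumes "k \<ge> 2"
  shows "connected_in (grid_vertices (2*k-2)) grid_adj {y\<in>grid_vertices (2*k-2). k \<in> Mk k y}"
proof (rule descent_connected[where root="(2*k-2,1)" and f="\<lambda>(r,c). c + (2*k-2-r)"])
  show "\<And>a b. grid_adj a b \<Longrightarrow> grid_adj b a" by (rule grid_sym)
  show "{y \<in> grid_vertices (2*k-2). k \<in> Mk k y} \<subseteq> grid_vertices (2*k-2)" by blast
  show "(2*k-2,1) \<in> {y \<in> grid_vertices (2*k-2). k \<in> Mk k y}"
    using assms by (simp add: grid_vertices_def memk)
  fix s assume s: "s \<in> {y \<in> grid_vertices (2*k-2). k \<in> Mk k y}" "s \<noteq> (2*k-2,1)"
  obtain r c where rc: "s = (r,c)" by fastforce
  have g: "1 \<le> r" "r \<le> 2*k-2" "1 \<le> c" "c \<le> 2*k-2" using s rc by (auto simp: grid_vertices_def)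
  have cr: "c < r" using s rc memk[OF g] by auto
  show "\<exists>t\<in>{y \<in> grid_vertices (2*k-2). k \<in> Mk k y}. grid_adj s t \<and>
          (case t of (r,c) \<Rightarrow> c + (2*k-2-r)) < (case s of (r,c) \<Rightarrow> c + (2*k-2-r))"
  proof (cases "c > 1")
    case True
    then show ?thesis using g cr rc
      by (intro bexI[where x="(r,c-1)"]) (auto simp: gadj grid_vertices_def memk)
  next
    case False
    then have "c = 1" "r < 2*k-2" using g s rc by auto
    then show ?thesis using g cr rc
      by (intro bexI[where x="(r+1,c)"]) (auto simp: gadj grid_vertices_def memk)
  qed
qed

lemma conn_a:
  assumes "1 \<le> a" "a < k"
  shows "connected_in (grid_vertices (2*k-2)) grid_adj {y\<in>grid_vertices (2*k-2). a \<in> Mk k y}"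
proof (rule descent_connected[where root="(2*a-1,2*a-1)" and f="\<lambda>(r,c). c - r + (if r = 2*a then 2 else 0)"])
  show "\<And>a b. grid_adj a b \<Longrightarrow> grid_adj b a" by (rule grid_sym)
  show "{y \<in> grid_vertices (2*k-2). a \<in> Mk k y} \<subseteq> grid_vertices (2*k-2)" by blast
  show "(2*a-1,2*a-1) \<in> {y \<in> grid_vertices (2*k-2). a \<in> Mk k y}"
    using assms by (simp add: grid_vertices_def mema) arith
  fix s assume s: "s \<in> {y \<in> grid_vertices (2*k-2). a \<in> Mk k y}" "s \<noteq> (2*a-1,2*a-1)"
  obtain r c where rc: "s = (r,c)" by fastforce
  have g: "1 \<le> r" "r \<le> 2*k-2" "1 \<le> c" "c \<le> 2*k-2" using s rc by (auto simp: grid_vertices_def)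
  have m: "(r=2*a-1 \<and> 2*a-1 \<le> c) \<or> (r = 2*a \<and> even c \<and> 2*a \<le> c) \<or> (c = 2*a-1 \<and> r \<le> c)"
    using s rc mema[OF assms g] by auto
  show "\<exists>t\<in>{y \<in> grid_vertices (2*k-2). a \<in> Mk k y}. grid_adj s t \<and>
          (case t of (r,c) \<Rightarrow> c - r + (if r = 2*a then 2 else 0)) < (case s of (r,c) \<Rightarrow> c - r + (if r = 2*a then 2 else 0))"
  proof -
    consider "r=2*a-1" "2*a-1 < c" | "r = 2*a" "even c" "2*a \<le> c" | "c = 2*a-1" "r < c"
      using m s rc by fastforce
    then show ?thesis
    proof cases
      case 1
      then show ?thesis using g rc assms
        by (intro bexI[where x="(r,c-1)"]) (auto simp: gadj grid_vertices_def mema)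
    next
      case 2
      then show ?thesis using g rc assms
        by (intro bexI[where x="(r-1,c)"]) (auto simp: gadj grid_vertices_def mema)
    next
      case 3
      then show ?thesis using g rc assms
        by (intro bexI[where x="(r+1,c)"]) (auto simp: gadj grid_vertices_def mema)
    qed
  qed
qed

lemma dbl:
  assumes "Mk k (r,c) = {x,x'}" "x \<noteq> x'"
  shows "r < c \<and> odd c \<and> odd r \<and> {x,x'} = {(r+1) div 2, (c+1) div 2}"
proof -
  have nc: "\<not> c < r" using assms by (auto simp: doubleton_eq_iff)
  moreover have oc: "odd c" using assms nc by (auto simp: doubleton_eq_iff)
  moreover have "odd r" using assms nc oc by (auto simp: doubleton_eq_iff)
  moreover have "r \<noteq> c" using assms nc oc \<open>odd r\<close> by (auto simp: doubleton_eq_iff)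
  ultimately show ?thesis using assms by auto
qed

lemma nb:
  assumes "r < c" "odd c" "odd r" "\<bar>int r - int r'\<bar> + \<bar>int c - int c'\<bar> = 1"
  shows "Mk k (r',c') = {(r+1) div 2} \<or> Mk k (r',c') = {(c+1) div 2}"
proof -
  have "(r' = r \<and> c' = c+1) \<or> (r'=r \<and> c'+1 = c) \<or> (c'=c \<and> r' = r+1) \<or> (c'=c \<and> r'+1=r)"
    using assms(4) by arith
  moreover have "odd c \<Longrightarrow> odd r \<Longrightarrow> r < c \<Longrightarrow> r + 1 < c" by presburger
  ultimately show ?thesis using assms(1-3) by auto
qed

theorem lemma6p10:
  fixes k :: nat
  assumes "k \<ge> 2"
  shows "is_almost_minor (complete_vertices k) complete_adj
           (grid_vertices (2 * k - 2)) grid_adj"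
  unfolding is_almost_minor_def
proof (intro exI[where x="Mk k"])
  let ?X = "complete_vertices k" and ?Y = "grid_vertices (2*k-2)"
  have c1: "\<forall>y\<in>?Y. Mk k y \<subseteq> ?X \<and> card (Mk k y) \<in> {1, 2}"
  proof
    fix y assume "y \<in> ?Y"
    then obtain r c where y: "y = (r,c)" "1 \<le> r" "r \<le> 2*k-2" "1 \<le> c" "c \<le> 2*k-2"
      by (auto simp: grid_vertices_def)
    have "(r+1) div 2 \<in> ?X" "(c+1) div 2 \<in> ?X" "k \<in> ?X" using y assms
      by (auto simp: complete_vertices_def)
    then show "Mk k y \<subseteq> ?X \<and> card (Mk k y) \<in> {1, 2}"
      using y by (auto simp: card_insert_if)
  qed
  have c2: "\<forall>x\<in>?X. \<exists>y\<in>?Y. Mk k y = {x}"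
  proof
    fix x assume x: "x \<in> ?X"
    show "\<exists>y\<in>?Y. Mk k y = {x}"
    proof (cases "x = k")
      case True
      then show ?thesis using assms
        by (intro bexI[where x="(2,1)"]) (auto simp: grid_vertices_def)
    next
      case False
      then have "1 \<le> x" "x < k" using x by (auto simp: complete_vertices_def)
      then show ?thesis
        by (intro bexI[where x="(2*x-1,2*x-1)"]) (auto simp: grid_vertices_def)
    qed
  qed
  have c3: "\<forall>x\<in>?X. \<forall>x'\<in>?X. complete_adj x x' \<longrightarrow>
        (\<exists>y\<in>?Y. \<exists>y'\<in>?Y. grid_adj y y' \<and> Mk k y = {x} \<and> Mk k y' = {x'})"
  proof (intro ballI impI)
    have lt: "\<exists>y\<in>?Y. \<exists>y'\<in>?Y. grid_adj y y' \<and> Mk k y = {a} \<and> Mk k y' = {b}"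
      if "1 \<le> a" "a < b" "b \<le> k" for a b
    proof (cases "b = k")
      case True
      then show ?thesis using that
        by (intro bexI[where x="(2*a-1,2*a-1)"] bexI[where x="(2*a,2*a-1)"])
          (auto simp: grid_vertices_def gadj)
    next
      case False
      then show ?thesis using that
        by (intro bexI[where x="(2*a,2*b)"] bexI[where x="(2*a,2*b-1)"])
          (auto simp: grid_vertices_def gadj)
    qed
    fix x x' assume x: "x \<in> ?X" "x' \<in> ?X" "complete_adj x x'"
    then have "x < x' \<or> x' < x" by (auto simp: complete_adj_def)
    then show "\<exists>y\<in>?Y. \<exists>y'\<in>?Y. grid_adj y y' \<and> Mk k y = {x} \<and> Mk k y' = {x'}"
    proof
      assume "x < x'" then show ?thesis using lt[of x x'] x by (auto simp: complete_vertices_def)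
    next
      assume "x' < x" then obtain y y' where "y\<in>?Y" "y'\<in>?Y" "grid_adj y y'" "Mk k y = {x'}" "Mk k y' = {x}"
        using lt[of x' x] x by (auto simp: complete_vertices_def)
      then show ?thesis using grid_sym by blast
    qed
  qed
  have c4: "\<forall>x\<in>?X. connected_in ?Y grid_adj {y\<in>?Y. x \<in> Mk k y}"
  proof
    fix x assume x: "x \<in> ?X"
    show "connected_in ?Y grid_adj {y\<in>?Y. x \<in> Mk k y}"
    proof (cases "x = k")
      case True then show ?thesis using conn_k assms by simp
    next
      case False then show ?thesis using conn_a x by (auto simp: complete_vertices_def)
    qed
  qed
  have c5: "\<forall>y\<in>?Y. \<forall>x x'. Mk k y = {x, x'} \<and> x \<noteq> x' \<longrightarrow>
        (\<forall>y'\<in>?Y. grid_adj y y' \<longrightarrow> Mk k y' = {x} \<or> Mk k y' = {x'})"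
  proof (intro ballI allI impI)
    fix y x x' y' assume y: "y \<in> ?Y" and d: "Mk k y = {x, x'} \<and> x \<noteq> x'" and y': "y' \<in> ?Y"
      and adj: "grid_adj y y'"
    obtain r c where rc: "y = (r,c)" by fastforce
    obtain r' c' where rc': "y' = (r',c')" by fastforce
    have g: "1 \<le> r" "r \<le> 2*k-2" "1 \<le> c" "c \<le> 2*k-2" "1 \<le> r'" "r' \<le> 2*k-2" "1 \<le> c'" "c' \<le> 2*k-2"
      using y y' rc rc' by (auto simp: grid_vertices_def)
    have dd: "r < c" "odd c" "odd r" "{x,x'} = {(r+1) div 2, (c+1) div 2}"
      using dbl[of k r c x x'] d rc by auto
    have a: "\<bar>int r - int r'\<bar> + \<bar>int c - int c'\<bar> = 1" using adj rc rc' gadj by simp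
    have "Mk k y' = {(r+1) div 2} \<or> Mk k y' = {(c+1) div 2}"
      using nb[OF dd(1-3) a] rc' by simp
    moreover have "((r+1) div 2 = x \<and> (c+1) div 2 = x') \<or> ((r+1) div 2 = x' \<and> (c+1) div 2 = x)"
      using dd(4) d by (auto simp: doubleton_eq_iff)
    ultimately show "Mk k y' = {x} \<or> Mk k y' = {x'}" by auto
  qed
  show "almost_minor_map ?X complete_adj ?Y grid_adj (Mk k)"
    unfolding almost_minor_map_def using c1 c2 c3 c4 c5 by blast
qed

end
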